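(* Let $\mathbf{D}^\pm_{EC}$ be entropy conservative fluctuations (satisfying (C1)–(C5)) and let $\mathbf{Q}:\mathcal{U}\times\mathcal{U}\to\mathbb{R}^{n\times n}$ satisfy $[\![\mathbf{w}]\!]^T\mathbf{Q}(\mathbf{u}_L,\mathbf{u}_R)[\![\mathbf{u}]\!]\ge 0$ for all $\mathbf{u}_L,\mathbf{u}_R\in\mathcal{U}$. Define the entropy stable fluctuations $\mathbf{D}^-_{ES}=\mathbf{D}^-_{EC}-\mathbf{Q}[\![\mathbf{u}]\!]$ and $\mathbf{D}^+_{ES}=\mathbf{D}^+_{EC}+\mathbf{Q}[\![\mathbf{u}]\!]$ (all evaluated at $(\mathbf{u}_L,\mathbf{u}_R)$). Consider the scheme $$\omega_i\frac{\Delta x_k}{2}\dot{\mathbf{U}}^k_i+\omega_i\sum_{m=0}^N 2\mathcal{D}_{im}\mathbf{D}^-_{EC}(\mathbf{U}^k_i,\mathbf{U}^k_m)+\delta_{i0}\mathbf{D}^+_{ES}(\mathbf{U}^{k-1}_N,\mathbf{U}^k_0)+\delta_{iN}\mathbf{D}^-_{ES}(\mathbf{U}^k_N,\mathbf{U}^{k+1}_0)=0,\quad i=0,\dots,N,$$ with time-differentiable solution. Then on each element $$\sum_{i=0}^N\omega_i\frac{\Delta x_k}{2}\frac{dS(\mathbf{U}^k_i)}{dt}\le\mathcal{F}(\mathbf{U}^{k-1}_N,\mathbf{U}^k_0)-\mathcal{F}(\mathbf{U}^k_N,\mathbf{U}^{k+1}_0),$$ where $\mathcal{F}(\mathbf{u}_L,\mathbf{u}_R):=q(\mathbf{u}_L)+\mathbf{w}(\mathbf{u}_L)^T\mathbf{D}^-_{EC}(\mathbf{u}_L,\mathbf{u}_R)-\tfrac12(\mathbf{w}_L+\mathbf{w}_R)^T\mathbf{Q}(\mathbf{u}_L,\mathbf{u}_R)[\![\mathbf{u}]\!]$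 is a numerical entropy flux consistent with $q$, i.e. $\mathcal{F}(\mathbf{u},\mathbf{u})=q(\mathbf{u})$.
   Context: System: $\mathbf{u}_t+\mathbf{f}(\mathbf{u})_x+\mathbf{B}(\mathbf{u})\mathbf{u}_x=0$, $\mathbf{u}\in\mathcal{U}\subset\mathbb{R}^n$, generalized Jacobian $\mathbf{A}:=\mathbf{f}_{\mathbf{u}}+\mathbf{B}$. Entropy pair: strictly convex $C^2$ $S$ and entropy flux $q$ with $q_{\mathbf{u}}=\mathbf{w}^T(\mathbf{f}_{\mathbf{u}}+\mathbf{B})$, $\mathbf{w}(\mathbf{u}):=S_{\mathbf{u}}(\mathbf{u})$. Notation: $[\![\cdot]\!]=(\cdot)_R-(\cdot)_L$, $\mathbf{w}_L=\mathbf{w}(\mathbf{u}_L)$, $q_L=q(\mathbf{u}_L)$, etc. EC fluctuation conditions for $\mathbf{D}^\pm$, for all $\mathbf{u},\mathbf{u}_L,\mathbf{u}_R$ and a given family of paths $\Phi(s;\mathbf{u}_L,\mathbf{u}_R)$ (Lipschitz, $\Phi(0;\cdot)=\mathbf{u}_L$, $\Phi(1;\cdot)=\mathbf{u}_R$, $\Phi(s;\mathbf{u},\mathbf{u})=\mathbf{u}$): (C1) $\mathbf{D}^\pm(\mathbf{u},\mathbf{u})=0$; (C2) $\mathbf{D}^-(\mathbf{u}_L,\mathbf{u}_R)+\mathbf{D}^+(\mathbf{u}_L,\mathbf{u}_R)=\int_0^1\mathbf{A}(\Phi(s;\mathbf{u}_L,\mathbf{u}_R))\partial_s\Phi(s;\mathbf{u}_L,\mathbf{u}_R)\,ds$;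 (C3) $\mathbf{D}^-(\mathbf{u}_L,\mathbf{u}_R)+\mathbf{D}^+(\mathbf{u}_R,\mathbf{u}_L)=0$; (C4) $\mathbf{w}_L^T\mathbf{D}^-(\mathbf{u}_L,\mathbf{u}_R)+\mathbf{w}_R^T\mathbf{D}^+(\mathbf{u}_L,\mathbf{u}_R)=q_R-q_L$; (C5) $\frac{\partial\mathbf{D}^-(\mathbf{u}_L,\mathbf{u}_R)}{\partial\mathbf{u}_R}\big|_{\mathbf{u}_R=\mathbf{u}_L}=\frac12\mathbf{A}(\mathbf{u}_L)$. Discretization: elements $\Omega^k=[x_{k-1},x_k]$ of width $\Delta x_k$ affinely mapped to $[-1,1]$; nodal values $\mathbf{U}^k_i$ at LGL nodes $-1=\xi_0<\dots<\xi_N=1$ with LGL weights $\omega_i$; $\mathcal{D}_{ij}=l_j'(\xi_i)$ for the Lagrange basis $l_j$; summation-by-parts property $\mathcal{Q}+\mathcal{Q}^T=\mathcal{B}$ with $\mathcal{Q}_{ij}=\omega_i\mathcal{D}_{ij}$, $\mathcal{B}_{ij}=\delta_{iN}\delta_{jN}-\delta_{i0}\delta_{j0}$. *)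

theory Defs
  imports "HOL-Analysis.Analysis"
begin

definition strictly_convex_on :: "'a::real_vector set \<Rightarrow> ('a \<Rightarrow> real) \<Rightarrow> bool" where
  "strictly_convex_on U S \<longleftrightarrow>
     (\<forall>x\<in>U. \<forall>y\<in>U. \<forall>t::real. x \<noteq> y \<and> 0 < t \<and> t < 1 \<and> (1 - t) *\<^sub>R x + t *\<^sub>R y \<in> U
        \<longrightarrow> S ((1 - t) *\<^sub>R x + t *\<^sub>R y) < (1 - t) * S x + t * S y)"

fun legendre :: "nat \<Rightarrow> real \<Rightarrow> real" where
  "legendre 0 x = 1"
| "legendre (Suc 0) x = x"
| "legendre (Suc (Suc n)) x =
     ((2 * real n + 3) * x * legendre (Suc n) x - (real n + 1) * legendre n x) / (real n + 2)"

definition LGL_nodes :: "nat \<Rightarrow> (nat \<Rightarrow> real) \<Rightarrow> bool" where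
  "LGL_nodes N \<xi> \<longleftrightarrow> \<xi> 0 = -1 \<and> \<xi> N = 1 \<and> strict_mono_on {0..N} \<xi> \<and>
     \<xi> ` {1..<N} = {x. deriv (legendre N) x = 0}"

definition LGL_weight :: "nat \<Rightarrow> (nat \<Rightarrow> real) \<Rightarrow> nat \<Rightarrow> real" where
  "LGL_weight N \<xi> i = 2 / (real N * (real N + 1) * (legendre N (\<xi> i))\<^sup>2)"

definition lagrange_basis :: "nat \<Rightarrow> (nat \<Rightarrow> real) \<Rightarrow> nat \<Rightarrow> real \<Rightarrow> real" where
  "lagrange_basis N \<xi> j x = (\<Prod>m\<in>{0..N} - {j}. (x - \<xi> m) / (\<xi> j - \<xi> m))"

definition diff_matrix :: "nat \<Rightarrow> (nat \<Rightarrow> real) \<Rightarrow> nat \<Rightarrow> nat \<Rightarrow> real" where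
  "diff_matrix N \<xi> i j = deriv (lagrange_basis N \<xi> j) (\<xi> i)"

definition bdry_matrix :: "nat \<Rightarrow> nat \<Rightarrow> nat \<Rightarrow> real" where
  "bdry_matrix N i j = (if i = N \<and> j = N then 1 else 0) - (if i = 0 \<and> j = 0 then 1 else 0)"

definition DES_minus ::
  "(real^'a::finite \<Rightarrow> real^'a \<Rightarrow> real^'a) \<Rightarrow> (real^'a \<Rightarrow> real^'a \<Rightarrow> real^'a^'a)
     \<Rightarrow> real^'a \<Rightarrow> real^'a \<Rightarrow> real^'a" where
  "DES_minus Dm Q uL uR = Dm uL uR - Q uL uR *v (uR - uL)"

definition DES_plus ::
  "(real^'a::finite \<Rightarrow> real^'a \<Rightarrow> real^'a) \<Rightarrow> (real^'a \<Rightarrow> real^'a \<Rightarrow> real^'a^'a)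
     \<Rightarrow> real^'a \<Rightarrow> real^'a \<Rightarrow> real^'a" where
  "DES_plus Dp Q uL uR = Dp uL uR + Q uL uR *v (uR - uL)"

definition num_entropy_flux ::
  "(real^'a::finite \<Rightarrow> real) \<Rightarrow> (real^'a \<Rightarrow> real^'a) \<Rightarrow> (real^'a \<Rightarrow> real^'a \<Rightarrow> real^'a)
     \<Rightarrow> (real^'a \<Rightarrow> real^'a \<Rightarrow> real^'a^'a) \<Rightarrow> real^'a \<Rightarrow> real^'a \<Rightarrow> real" where
  "num_entropy_flux q w Dm Q uL uR =
     q uL + w uL \<bullet> Dm uL uR - (1/2) * ((w uL + w uR) \<bullet> (Q uL uR *v (uR - uL)))"

end

theory Submission
  imports Defs "HOL-Computational_Algebra.Polynomial"
begin

lemma lagrange_node: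
  assumes inj: "inj_on \<xi> {0..N}" and i: "i \<le> N" and j: "j \<le> N"
  shows "lagrange_basis N \<xi> j (\<xi> i) = (if i = j then 1 else 0)"
proof (cases "i = j")
  case True
  have "\<forall>m\<in>{0..N} - {j}. \<xi> j \<noteq> \<xi> m" using inj j by (auto simp: inj_on_def)
  then show ?thesis using True unfolding lagrange_basis_def by (simp add: prod.neutral)
next
  case False
  have "(\<Prod>m\<in>{0..N} - {j}. (\<xi> i - \<xi> m) / (\<xi> j - \<xi> m)) = 0"
    by (rule prod_zero) (use i False in auto)
  then show ?thesis using False unfolding lagrange_basis_def by simp
qed

lemma lagrange_sum_one:
  assumes inj: "inj_on \<xi> {0..N}"
  shows "(\<Sum>j\<in>{0..N}. lagrange_basis N \<xi> j x) = 1"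
proof -
  define L where "L j = smult (inverse (\<Prod>m\<in>{0..N}-{j}. (\<xi> j - \<xi> m))) (\<Prod>m\<in>{0..N}-{j}. [:-\<xi> m, 1:])" for j
  have polyL: "poly (L j) y = lagrange_basis N \<xi> j y" for j y
    unfolding L_def lagrange_basis_def poly_smult poly_prod prod_dividef
    by (simp add: field_simps)
  have degL: "degree (L j) \<le> N" if "j \<le> N" for j
  proof -
    have "degree (L j) \<le> degree (\<Prod>m\<in>{0..N}-{j}. [:-\<xi> m, 1:])" unfolding L_def by (rule degree_smult_le)
    also have "\<dots> \<le> (\<Sum>m\<in>{0..N}-{j}. degree [:-\<xi> m, 1:])" using degree_prod_sum_le[of "{0..N}-{j}" "\<lambda>m. [:-\<xi> m,1:]"] by (simp add: o_def)
    also have "\<dots> = card ({0..N}-{j})" by simp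
    also have "\<dots> = N" using that by simp
    finally show ?thesis .
  qed
  define p where "p = (\<Sum>j\<in>{0..N}. L j) - 1"
  have polyp: "poly p y = (\<Sum>j\<in>{0..N}. lagrange_basis N \<xi> j y) - 1" for y
    unfolding p_def by (simp add: poly_sum polyL)
  have degp: "degree p \<le> N"
  proof -
    have "degree (\<Sum>j\<in>{0..N}. L j) \<le> N" by (rule degree_sum_le) (auto intro: degL)
    then show ?thesis unfolding p_def by (metis degree_1 degree_diff_le le0)
  qed
  have roots: "\<xi> ` {0..N} \<subseteq> {y. poly p y = 0}"
  proof
    fix y assume "y \<in> \<xi> ` {0..N}"
    then obtain i where i: "i \<le> N" "y = \<xi> i" by auto
    have "(\<Sum>j\<in>{0..N}. lagrange_basis N \<xi> j (\<xi> i)) = (\<Sum>j\<in>{0..N}. (if i = j then 1 else 0))"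
      using lagrange_node[OF inj i(1)] by (intro sum.cong) auto
    also have "\<dots> = 1" using i by simp
    finally show "y \<in> {y. poly p y = 0}" using i polyp by simp
  qed
  have "p = 0"
  proof (rule ccontr)
    assume "p \<noteq> 0"
    then have "card {y. poly p y = 0} \<le> N" using card_poly_roots_bound degp le_trans by blast
    moreover have "card (\<xi> ` {0..N}) \<le> card {y. poly p y = 0}"
      using roots poly_roots_finite[OF \<open>p \<noteq> 0\<close>] by (intro card_mono) auto
    moreover have "card (\<xi> ` {0..N}) = N + 1" using inj by (simp add: card_image)
    ultimately show False by simp
  qed
  then show ?thesis using polyp[of x] by simp
qed

lemma diff_row_sum:
  assumes inj: "inj_on \<xi> {0..N}"
  shows "(\<Sum>m\<le>N. diff_matrix N \<xi> i m) = 0"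
proof -
  have pl: "lagrange_basis N \<xi> j = poly (smult (inverse (\<Prod>m\<in>{0..N}-{j}. (\<xi> j - \<xi> m))) (\<Prod>m\<in>{0..N}-{j}. [:-\<xi> m, 1:]))" for j
    unfolding lagrange_basis_def poly_smult poly_prod prod_dividef
    by (rule ext) (simp add: field_simps)
  have fd: "lagrange_basis N \<xi> j field_differentiable at y" for j y
    unfolding pl field_differentiable_def using poly_DERIV by blast
  have "(\<Sum>m\<le>N. diff_matrix N \<xi> i m) = deriv (\<lambda>y. \<Sum>m\<le>N. lagrange_basis N \<xi> m y) (\<xi> i)"
    unfolding diff_matrix_def by (subst deriv_sum) (auto intro: fd)
  also have "(\<lambda>y. \<Sum>m\<le>N. lagrange_basis N \<xi> m y) = (\<lambda>y. 1)"
    using lagrange_sum_one[OF inj] by (simp add: atLeast0AtMost)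
  finally show ?thesis by simp
qed

lemma bdry_sum:
  fixes h :: "nat \<Rightarrow> nat \<Rightarrow> real"
  shows "(\<Sum>i\<le>N. \<Sum>m\<le>N. bdry_matrix N i m * h i m) = h N N - h 0 0"
proof -
  have pw: "bdry_matrix N i m * h i m = (if i = N \<and> m = N then h N N else 0) - (if i = 0 \<and> m = 0 then h 0 0 else 0)" for i m
    unfolding bdry_matrix_def by auto
  have e1: "(\<Sum>m\<le>N. (if i = N \<and> m = N then h N N else 0)) = (if i = N then h N N else 0)" for i
    by (cases "i = N") simp_all
  have e2: "(\<Sum>m\<le>N. (if i = 0 \<and> m = 0 then h 0 0 else 0)) = (if i = 0 then h 0 0 else 0)" for i
    by (cases "i = 0") simp_all
  have "(\<Sum>i\<le>N. \<Sum>m\<le>N. bdry_matrix N i m * h i m)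
     = (\<Sum>i\<le>N. (\<Sum>m\<le>N. (if i = N \<and> m = N then h N N else 0)) - (\<Sum>m\<le>N. (if i = 0 \<and> m = 0 then h 0 0 else 0)))"
    by (simp only: pw sum_subtractf)
  also have "\<dots> = (\<Sum>i\<le>N. (if i = N then h N N else 0) - (if i = 0 then h 0 0 else 0))"
    by (simp only: e1 e2)
  also have "\<dots> = h N N - h 0 0"
    by (simp only: sum_subtractf) simp
  finally show ?thesis .
qed

lemma vol_sum:
  fixes a g :: "nat \<Rightarrow> nat \<Rightarrow> real" and r :: "nat \<Rightarrow> real"
  assumes sbp: "\<And>i m. i \<le> N \<Longrightarrow> m \<le> N \<Longrightarrow> a i m + a m i = bdry_matrix N i m"
    and rows: "\<And>i. i \<le> N \<Longrightarrow> (\<Sum>m\<le>N. a i m) = 0"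
    and gas: "\<And>i m. i \<le> N \<Longrightarrow> m \<le> N \<Longrightarrow> g i m - g m i = r m - r i"
    and gd: "\<And>i. i \<le> N \<Longrightarrow> g i i = 0"
  shows "(\<Sum>i\<le>N. \<Sum>m\<le>N. 2 * a i m * g i m) = r N - r 0"
proof -
  have s1: "(\<Sum>i\<le>N. \<Sum>m\<le>N. 2 * a i m * g i m)
      = (\<Sum>i\<le>N. \<Sum>m\<le>N. a i m * g i m) - (\<Sum>i\<le>N. \<Sum>m\<le>N. a m i * g i m)
        + (\<Sum>i\<le>N. \<Sum>m\<le>N. bdry_matrix N i m * g i m)"
  proof -
    have "(\<Sum>i\<le>N. \<Sum>m\<le>N. 2 * a i m * g i m) = (\<Sum>i\<le>N. \<Sum>m\<le>N. a i m * g i m - a m i * g i m + bdry_matrix N i m * g i m)"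
      by (intro sum.cong refl) (simp add: sbp[symmetric] algebra_simps)
    then show ?thesis by (simp add: sum.distrib sum_subtractf)
  qed
  have sw: "(\<Sum>i\<le>N. \<Sum>m\<le>N. a m i * g i m) = (\<Sum>i\<le>N. \<Sum>m\<le>N. a i m * g m i)"
    by (rule sum.swap)
  have s2: "(\<Sum>i\<le>N. \<Sum>m\<le>N. a i m * g i m) - (\<Sum>i\<le>N. \<Sum>m\<le>N. a i m * g m i)
      = (\<Sum>i\<le>N. \<Sum>m\<le>N. a i m * r m) - (\<Sum>i\<le>N. r i * (\<Sum>m\<le>N. a i m))"
  proof -
    have "(\<Sum>i\<le>N. \<Sum>m\<le>N. a i m * g i m) - (\<Sum>i\<le>N. \<Sum>m\<le>N. a i m * g m i)
        = (\<Sum>i\<le>N. \<Sum>m\<le>N. a i m * r m - a i m * r i)"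
      unfolding sum_subtractf[symmetric]
      by (intro sum.cong refl) (simp add: right_diff_distrib[symmetric] gas)
    then show ?thesis by (simp add: sum_subtractf sum_distrib_left mult.commute)
  qed
  have s3: "(\<Sum>i\<le>N. r i * (\<Sum>m\<le>N. a i m)) = 0" by (simp add: rows)
  have s4: "(\<Sum>i\<le>N. \<Sum>m\<le>N. a i m * r m)
      = (\<Sum>i\<le>N. \<Sum>m\<le>N. bdry_matrix N i m * r m) - (\<Sum>i\<le>N. \<Sum>m\<le>N. a m i * r m)"
  proof -
    have "(\<Sum>i\<le>N. \<Sum>m\<le>N. a i m * r m) = (\<Sum>i\<le>N. \<Sum>m\<le>N. bdry_matrix N i m * r m - a m i * r m)"
      by (intro sum.cong refl) (simp add: sbp[symmetric] algebra_simps)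
    then show ?thesis by (simp add: sum_subtractf)
  qed
  have s5: "(\<Sum>i\<le>N. \<Sum>m\<le>N. a m i * r m) = 0"
    by (subst sum.swap) (simp add: sum_distrib_right[symmetric] rows)
  have b1: "(\<Sum>i\<le>N. \<Sum>m\<le>N. bdry_matrix N i m * g i m) = 0"
    using bdry_sum[of N g] gd by simp
  have b2: "(\<Sum>i\<le>N. \<Sum>m\<le>N. bdry_matrix N i m * r m) = r N - r 0"
    using bdry_sum[of N "\<lambda>i m. r m"] by simp
  show ?thesis using s1 sw s2 s3 s4 s5 b1 b2 by linarith
qed

lemma final_alg:
  fixes L qN q0 qL a b d e x1 x2 y :: real
  assumes "L + (qN - q0) + (a + b) + (d - e) = 0" "y + a = q0 - qL" "x1 \<le> b" "e \<le> x2"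
  shows "L \<le> qL + y - 1/2 * (x1 + b) - (qN + d - 1/2 * (e + x2))"
  using assms by (simp add: field_simps)

theorem theorem4:
  fixes \<U> :: "(real^'n) set"
    and f :: "real^'n \<Rightarrow> real^'n" and Jf :: "real^'n \<Rightarrow> real^'n^'n"
    and B :: "real^'n \<Rightarrow> real^'n^'n" and A :: "real^'n \<Rightarrow> real^'n^'n"
    and S :: "real^'n \<Rightarrow> real" and w :: "real^'n \<Rightarrow> real^'n" and H :: "real^'n \<Rightarrow> real^'n^'n"
    and q :: "real^'n \<Rightarrow> real"
    and \<Phi> :: "real \<Rightarrow> real^'n \<Rightarrow> real^'n \<Rightarrow> real^'n"
    and Dm Dp :: "real^'n \<Rightarrow> real^'n \<Rightarrow> real^'n"
    and Q :: "real^'n \<Rightarrow> real^'n \<Rightarrow> real^'n^'n"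
    and N :: nat and \<xi> :: "nat \<Rightarrow> real"
    and x :: "int \<Rightarrow> real" and k :: int
    and U :: "int \<Rightarrow> nat \<Rightarrow> real \<Rightarrow> real^'n" and T :: "real set"
  assumes open_U: "open \<U>"
    \<comment> \<open>flux Jacobian and generalized Jacobian A = f_u + B\<close>
    and f_deriv: "\<forall>u\<in>\<U>. (f has_derivative (\<lambda>h. Jf u *v h)) (at u)"
    and A_def: "\<forall>u\<in>\<U>. A u = Jf u + B u"
    \<comment> \<open>entropy: strictly convex C^2 S with gradient w = S_u\<close>
    and S_convex: "strictly_convex_on \<U> S"
    and S_grad: "\<forall>u\<in>\<U>. (S has_derivative (\<lambda>h. w u \<bullet> h)) (at u)"
    and w_deriv: "\<forall>u\<in>\<U>. (w has_derivative (\<lambda>h. H u *v h)) (at u)"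
    and H_cont: "continuous_on \<U> H"
    \<comment> \<open>entropy flux: q_u = w^T (f_u + B)\<close>
    and q_deriv: "\<forall>u\<in>\<U>. (q has_derivative (\<lambda>h. w u \<bullet> (A u *v h))) (at u)"
    \<comment> \<open>family of Lipschitz paths\<close>
    and path_start: "\<forall>uL\<in>\<U>. \<forall>uR\<in>\<U>. \<Phi> 0 uL uR = uL"
    and path_end: "\<forall>uL\<in>\<U>. \<forall>uR\<in>\<U>. \<Phi> 1 uL uR = uR"
    and path_const: "\<forall>u\<in>\<U>. \<forall>s\<in>{0..1}. \<Phi> s u u = u"
    and path_lip: "\<forall>uL\<in>\<U>. \<forall>uR\<in>\<U>. \<exists>C. C-lipschitz_on {0..1} (\<lambda>s. \<Phi> s uL uR)"
    and path_in: "\<forall>uL\<in>\<U>. \<forall>uR\<in>\<U>. \<forall>s\<in>{0..1}. \<Phi> s uL uR \<in> \<U>"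
    \<comment> \<open>(C1)-(C5): entropy conservative fluctuations\<close>
    and C1: "\<forall>u\<in>\<U>. Dm u u = 0 \<and> Dp u u = 0"
    and C2: "\<forall>uL\<in>\<U>. \<forall>uR\<in>\<U>. Dm uL uR + Dp uL uR =
               integral {0..1} (\<lambda>s. A (\<Phi> s uL uR) *v
                 vector_derivative (\<lambda>s. \<Phi> s uL uR) (at s within {0..1}))"
    and C3: "\<forall>uL\<in>\<U>. \<forall>uR\<in>\<U>. Dm uL uR + Dp uR uL = 0"
    and C4: "\<forall>uL\<in>\<U>. \<forall>uR\<in>\<U>. w uL \<bullet> Dm uL uR + w uR \<bullet> Dp uL uR = q uR - q uL"
    and C5: "\<forall>uL\<in>\<U>. ((\<lambda>uR. Dm uL uR) has_derivative (\<lambda>h. (1/2) *\<^sub>R (A uL *v h))) (at uL)"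
    \<comment> \<open>dissipation matrix\<close>
    and Q_diss: "\<forall>uL\<in>\<U>. \<forall>uR\<in>\<U>. (w uR - w uL) \<bullet> (Q uL uR *v (uR - uL)) \<ge> 0"
    \<comment> \<open>LGL discretization with SBP property\<close>
    and N_pos: "N \<ge> 1"
    and nodes: "LGL_nodes N \<xi>"
    and SBP: "\<forall>i\<le>N. \<forall>j\<le>N. LGL_weight N \<xi> i * diff_matrix N \<xi> i j
                 + LGL_weight N \<xi> j * diff_matrix N \<xi> j i = bdry_matrix N i j"
    and mesh: "x (k - 1) < x k"
    \<comment> \<open>time-differentiable solution of the scheme on element k\<close>
    and open_T: "open T"
    and U_diff: "\<forall>t\<in>T. \<forall>i\<le>N. U k i differentiable (at t)"
    and U_in: "\<forall>t\<in>T. (\<forall>i\<le>N. U k i t \<in> \<U>) \<and> U (k - 1) N t \<in> \<U> \<and> U (k + 1) 0 t \<in> \<U>"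
    and scheme: "\<forall>t\<in>T. \<forall>i\<le>N.
        (LGL_weight N \<xi> i * (x k - x (k - 1)) / 2) *\<^sub>R vector_derivative (U k i) (at t)
        + (\<Sum>m\<le>N. (LGL_weight N \<xi> i * 2 * diff_matrix N \<xi> i m) *\<^sub>R Dm (U k i t) (U k m t))
        + (if i = 0 then DES_plus Dp Q (U (k - 1) N t) (U k 0 t) else 0)
        + (if i = N then DES_minus Dm Q (U k N t) (U (k + 1) 0 t) else 0) = 0"
  shows "(\<forall>t\<in>T. (\<Sum>i\<le>N. LGL_weight N \<xi> i * (x k - x (k - 1)) / 2 * deriv (\<lambda>\<tau>. S (U k i \<tau>)) t)
            \<le> num_entropy_flux q w Dm Q (U (k - 1) N t) (U k 0 t)
              - num_entropy_flux q w Dm Q (U k N t) (U (k + 1) 0 t))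
       \<and> (\<forall>u\<in>\<U>. num_entropy_flux q w Dm Q u u = q u)"
  proof
  have inj: "inj_on \<xi> {0..N}"
    using nodes unfolding LGL_nodes_def by (auto intro: strict_mono_on_imp_inj_on)
  show "\<forall>u\<in>\<U>. num_entropy_flux q w Dm Q u u = q u"
    using C1 by (simp add: num_entropy_flux_def)
  show "\<forall>t\<in>T. (\<Sum>i\<le>N. LGL_weight N \<xi> i * (x k - x (k - 1)) / 2 * deriv (\<lambda>\<tau>. S (U k i \<tau>)) t)
            \<le> num_entropy_flux q w Dm Q (U (k - 1) N t) (U k 0 t)
              - num_entropy_flux q w Dm Q (U k N t) (U (k + 1) 0 t)"
  proof
    fix t assume t: "t \<in> T"
    define \<omega> where "\<omega> i = LGL_weight N \<xi> i" for i
    define c where "c = x k - x (k - 1)"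
    define u where "u i = U k i t" for i
    define V where "V i = vector_derivative (U k i) (at t)" for i
    define uL where "uL = U (k - 1) N t"
    define uR where "uR = U (k + 1) 0 t"
    have uin: "\<And>i. i \<le> N \<Longrightarrow> u i \<in> \<U>" "uL \<in> \<U>" "uR \<in> \<U>"
      using U_in t unfolding u_def uL_def uR_def by auto
    have dS: "deriv (\<lambda>\<tau>. S (U k i \<tau>)) t = w (u i) \<bullet> V i" if i: "i \<le> N" for i
    proof -
      have vd: "(U k i has_derivative (\<lambda>h. h *\<^sub>R V i)) (at t)"
      proof -
        have "U k i differentiable (at t)" using U_diff t i by blast
        then show ?thesis unfolding V_def vector_derivative_works has_vector_derivative_def .
      qed
      have sd: "(S has_derivative (\<lambda>h. w (u i) \<bullet> h)) (at (U k i t))"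
        using S_grad uin(1)[OF i] unfolding u_def by blast
      have "((\<lambda>\<tau>. S (U k i \<tau>)) has_derivative (\<lambda>h. w (u i) \<bullet> (h *\<^sub>R V i))) (at t)"
        by (rule has_derivative_compose[OF vd sd])
      moreover have "(\<lambda>h. w (u i) \<bullet> (h *\<^sub>R V i)) = (*) (w (u i) \<bullet> V i)"
        by (rule ext) simp
      ultimately have "((\<lambda>\<tau>. S (U k i \<tau>)) has_field_derivative (w (u i) \<bullet> V i)) (at t)"
        unfolding has_field_derivative_def by simp
      then show ?thesis by (rule DERIV_imp_deriv)
    qed
    define g where "g i m = w (u i) \<bullet> Dm (u i) (u m)" for i m
    have eq: "\<omega> i * c / 2 * (w (u i) \<bullet> V i) + (\<Sum>m\<le>N. \<omega> i * 2 * diff_matrix N \<xi> i m * g i m)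
        + (if i = 0 then w (u 0) \<bullet> DES_plus Dp Q uL (u 0) else 0)
        + (if i = N then w (u N) \<bullet> DES_minus Dm Q (u N) uR else 0) = 0" if i: "i \<le> N" for i
    proof -
      have "w (u i) \<bullet> ((\<omega> i * c / 2) *\<^sub>R V i
        + (\<Sum>m\<le>N. (\<omega> i * 2 * diff_matrix N \<xi> i m) *\<^sub>R Dm (u i) (u m))
        + (if i = 0 then DES_plus Dp Q uL (u 0) else 0)
        + (if i = N then DES_minus Dm Q (u N) uR else 0)) = 0"
        using scheme t i unfolding \<omega>_def c_def u_def V_def uL_def uR_def by simp
      then show ?thesis
        by (simp add: inner_add_right inner_sum_right g_def mult.assoc if_distrib[of "\<lambda>v. w (u i) \<bullet> v"] cong: if_cong)
    qed
    have sumeq: "(\<Sum>i\<le>N. \<omega> i * c / 2 * (w (u i) \<bullet> V i)) + (\<Sum>i\<le>N. \<Sum>m\<le>N. \<omega> i * 2 * diff_matrix N \<xi> i m * g i m)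
        + w (u 0) \<bullet> DES_plus Dp Q uL (u 0) + w (u N) \<bullet> DES_minus Dm Q (u N) uR = 0"
    proof -
      have "(\<Sum>i\<le>N. \<omega> i * c / 2 * (w (u i) \<bullet> V i) + (\<Sum>m\<le>N. \<omega> i * 2 * diff_matrix N \<xi> i m * g i m)
        + (if i = 0 then w (u 0) \<bullet> DES_plus Dp Q uL (u 0) else 0)
        + (if i = N then w (u N) \<bullet> DES_minus Dm Q (u N) uR else 0)) = 0"
        using eq by (intro sum.neutral) auto
      then show ?thesis by (simp add: sum.distrib)
    qed
    have vol: "(\<Sum>i\<le>N. \<Sum>m\<le>N. \<omega> i * 2 * diff_matrix N \<xi> i m * g i m) = q (u N) - q (u 0)"
    proof -
      have "(\<Sum>i\<le>N. \<Sum>m\<le>N. 2 * (\<omega> i * diff_matrix N \<xi> i m) * g i m) = q (u N) - q (u 0)"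
      proof (rule vol_sum)
        fix i m assume "i \<le> N" "m \<le> N"
        then show "\<omega> i * diff_matrix N \<xi> i m + \<omega> m * diff_matrix N \<xi> m i = bdry_matrix N i m"
          using SBP unfolding \<omega>_def by blast
      next
        fix i assume "i \<le> N"
        show "(\<Sum>m\<le>N. \<omega> i * diff_matrix N \<xi> i m) = 0"
          by (simp add: sum_distrib_left[symmetric] diff_row_sum[OF inj])
      next
        fix i m assume i: "i \<le> N" and m: "m \<le> N"
        have "Dm (u m) (u i) = - Dp (u i) (u m)" using C3 uin(1)[OF i] uin(1)[OF m]
          by (metis add.commute add_eq_0_iff)
        then show "g i m - g m i = q (u m) - q (u i)"
          using C4 uin(1)[OF i] uin(1)[OF m] unfolding g_def by (simp add: inner_minus_right)
      next
        fix i assume "i \<le> N"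
        then show "g i i = 0" using C1 uin(1) unfolding g_def by simp
      qed
      then show ?thesis by (simp add: mult_ac)
    qed
    have lhs: "(\<Sum>i\<le>N. LGL_weight N \<xi> i * (x k - x (k - 1)) / 2 * deriv (\<lambda>\<tau>. S (U k i \<tau>)) t)
        = (\<Sum>i\<le>N. \<omega> i * c / 2 * (w (u i) \<bullet> V i))"
      unfolding \<omega>_def c_def using dS by simp
    have N0: "0 \<le> N" by simp
    have c4: "w uL \<bullet> Dm uL (u 0) + w (u 0) \<bullet> Dp uL (u 0) = q (u 0) - q uL"
      using C4 uin(1)[OF N0] uin(2) by blast
    have d1: "(w (u 0) - w uL) \<bullet> (Q uL (u 0) *v (u 0 - uL)) \<ge> 0"
      using Q_diss uin(1)[OF N0] uin(2) by blast
    have d2: "(w uR - w (u N)) \<bullet> (Q (u N) uR *v (uR - u N)) \<ge> 0"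
      using Q_diss uin(1)[of N] uin(3) by blast
    have d1': "w uL \<bullet> (Q uL (u 0) *v (u 0 - uL)) \<le> w (u 0) \<bullet> (Q uL (u 0) *v (u 0 - uL))"
      using d1 by (simp add: inner_diff_left)
    have d2': "w (u N) \<bullet> (Q (u N) uR *v (uR - u N)) \<le> w uR \<bullet> (Q (u N) uR *v (uR - u N))"
      using d2 by (simp add: inner_diff_left)
    have A1: "(\<Sum>i\<le>N. \<omega> i * c / 2 * (w (u i) \<bullet> V i)) + (q (u N) - q (u 0))
       + (w (u 0) \<bullet> Dp uL (u 0) + w (u 0) \<bullet> (Q uL (u 0) *v (u 0 - uL)))
       + (w (u N) \<bullet> Dm (u N) uR - w (u N) \<bullet> (Q (u N) uR *v (uR - u N))) = 0"
      using sumeq unfolding vol DES_plus_def DES_minus_def inner_add_right inner_diff_right .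
    have F: "(\<Sum>i\<le>N. \<omega> i * c / 2 * (w (u i) \<bullet> V i)) \<le> num_entropy_flux q w Dm Q uL (u 0) - num_entropy_flux q w Dm Q (u N) uR"
      unfolding num_entropy_flux_def inner_add_left
      by (rule final_alg[OF A1 c4 d1' d2'])
    show "(\<Sum>i\<le>N. LGL_weight N \<xi> i * (x k - x (k - 1)) / 2 * deriv (\<lambda>\<tau>. S (U k i \<tau>)) t)
            \<le> num_entropy_flux q w Dm Q (U (k - 1) N t) (U k 0 t)
              - num_entropy_flux q w Dm Q (U k N t) (U (k + 1) 0 t)"
      using F unfolding lhs u_def uL_def uR_def .
  qed
qed

end
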